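(* Assume (A1)–(A7) and (B0)–(B4) hold, and let $N(n)$ be a sequence of positive integers with $n/N(n)\to0$. Then for any sequence $\{\widehat\gamma_{0,n}\}_{n\ge1}$ of consistent and asymptotically normal estimators of $\gamma_0$, under $H_0$, as $n\to\infty$, for any $\beta\in\mathbb R^{k+1}$, $$\Delta_n(\psi_0,\gamma_0,\beta)=\Delta_n(\psi_0,\widehat\gamma_{0,N(n)},\beta)+o_P(1).$$
   Context: Fix integers $p\ge 1$, $k\ge 0$. For each $n$, let $1=t_0<\dots<t_{k+1}=n$ be integers (depending on $n$), $n_j(n)=t_j-t_{j-1}$, $\omega(t)=(\mathbf 1_{[t_0,t_1)}(t),\dots,\mathbf 1_{[t_k,t_{k+1})}(t))^\top$. Data: $X_t=T_\rho(Z_{t-1})+\gamma^\top\omega(t)+V_\theta(Z_{t-1})\varepsilon_t$, $Z_t=(X_t,\dots,X_{t-p+1})^\top$, $T_\rho,V_\theta:\mathbb R^p\to\mathbb R$ of known form, $\rho\in\Theta\subset\mathbb R^l$, $\theta\in\widetilde\Theta\subset\mathbb R^q$, true $\psi_0=(\rho_0^\top,\theta_0^\top)^\top$, $(\varepsilon_t)$ i.i.d. with density $f$, $\varepsilon_t$ independent of $G_{t-1}=\sigma(Z_1,\dots,Z_{t-1})$. $\varepsilon_t(\psi,\gamma)=(X_t-T_\rho(Z_{t-1})-\gamma^\top\omega(t))/V_\theta(Z_{t-1})$; $\phi_f=f'/f$; $I(f)=\int\phi_f^2f$. $H_0:\gamma=\gamma_0$. Define $\Delta_n(\psi,\gamma,\beta)=n^{-1/2}\sum_{t=1}^n\frac{\beta^\top\omega(t)}{V_\theta(Z_{t-1})}\phi_f[\varepsilon_t(\psi,\gamma)]$.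 $\widehat\gamma_{0,N(n)}$ is the estimator computed at sample size $N(n)$. $\|A\|_M$ is the maximum absolute row sum. Assumptions: (A1) $f$ differentiable, $\int xf=0$, $\int x^2f=1$. (A2) $\phi_f$ differentiable with $c_\phi$-Lipschitz derivative, $0<c_\phi<\infty$. (A3) $f,f'\to0$ at $\pm\infty$. (A4) $\int|\phi_f|^3f<\infty$. (A5) $n_j(n)\to\infty$, $n_j(n)/n\to\alpha_j$. (A6) For each $j$, the $Z_t$ with components indexed in $[t_{j-1},t_j)$ form a stationary ergodic sequence with distribution function $F_j$. (A7) $I(f)\int V_{\theta_0}^{-\ell}dF_j<\infty$, $\ell\le3$. (B0) $V_\theta(z)>\tau>0$ for all $\theta,z$. (B1) $\int\|x\|^{2+\delta}dF_j<\infty$ for some $\delta\ge0$. (B2) $\int|x\phi_f'(x)|f(x)dx<\infty$. (B3) $T_\rho(z)$, $V_\theta(z)$ continuous and differentiable in $\rho\in\mathrm{Int}\,\Theta$, $\theta\in\mathrm{Int}\,\widetilde\Theta$; there are $r_1,r_2$ with $\overline B(\rho_0,r_1)\subset\mathrm{Int}\,\Theta$, $\overline B(\theta_0,r_2)\subset\mathrm{Int}\,\widetilde\Theta$ such that $\sup_{\overline B(\rho_0,r_1)}\|\partial_\rho T_\rho(z)\|$, $\sup_{\overline B(\theta_0,r_2)}|V_\theta(z)|$, $\sup\|\partial_\theta V_\theta(z)\|$, $\sup\|\partial^2_\theta V_\theta(z)\|_M$ are bounded by $\vartheta(z)>0$ with $\int\vartheta^3dF_j<\infty$. (B4) There is a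 consistent estimator $\psi_n$ of $\psi_0$ with $\sqrt n(\psi_n-\psi_0)=n^{-1/2}\sum_{t=1}^n(\Psi_1(Z_{t-1},\psi_0)^\top\Omega_1[\varepsilon_t(\psi_0,\gamma_0)],\Psi_2(Z_{t-1},\psi_0)^\top\Omega_2[\varepsilon_t(\psi_0,\gamma_0)])^\top+o_P(1)$, $\Psi_1\in\mathbb R^l$, $\Psi_2\in\mathbb R^q$, $\Psi=(\Psi_1^\top,\Psi_2^\top)^\top$, $\Omega=(\Omega_1,\Omega_2)^\top$, $\int\|\Psi(x,\psi_0)\|^{2+\delta}dF_j<\infty$, $\int\|\Omega\|^{2+\delta}f<\infty$, $\int\Omega f=0$. *)

theory Defs
  imports "HOL-Probability.Probability"
begin

text \<open>Convergence in probability to a constant (o_P(1) when the constant is 0).\<close>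
definition conv_prob :: "'w measure \<Rightarrow> (nat \<Rightarrow> 'w \<Rightarrow> 'b::real_normed_vector) \<Rightarrow> 'b \<Rightarrow> bool" where
  "conv_prob M Y c \<longleftrightarrow>
     (\<forall>n. Y n \<in> borel_measurable M) \<and>
     (\<forall>e>0. (\<lambda>n. measure M {\<omega>\<in>space M. e < norm (Y n \<omega> - c)}) \<longlonglongrightarrow> 0)"

definition normal_law :: "real \<Rightarrow> real measure" where
  "normal_law v = (if 0 < v then density lborel (\<lambda>x. ennreal (normal_density 0 (sqrt v) x))
                   else return borel 0)"

text \<open>Estimators gh m (vectors in R^(k+1), components 0..k) of g0 which are consistent and
  asymptotically normal: sqrt m (gh m - g0) converges in law to N(0, Sigma) for some
  covariance matrix Sigma (expressed through all linear combinations, Cramer-Wold).\<close>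
definition consistent_asymp_normal ::
  "'w measure \<Rightarrow> nat \<Rightarrow> (nat \<Rightarrow> 'w \<Rightarrow> (nat \<Rightarrow> real)) \<Rightarrow> (nat \<Rightarrow> real) \<Rightarrow> bool" where
  "consistent_asymp_normal M k gh g0 \<longleftrightarrow>
     (\<forall>j\<le>k. conv_prob M (\<lambda>m \<omega>. gh m \<omega> j) (g0 j)) \<and>
     (\<exists>S :: nat \<Rightarrow> nat \<Rightarrow> real.
        (\<forall>i j. S i j = S j i) \<and>
        (\<forall>c. 0 \<le> (\<Sum>i\<le>k. \<Sum>j\<le>k. c i * S i j * c j)) \<and>
        (\<forall>c. weak_conv_m
               (\<lambda>m. distr M borel (\<lambda>\<omega>. sqrt (real m) * (\<Sum>j\<le>k. c j * (gh m \<omega> j - g0 j))))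
               (normal_law (\<Sum>i\<le>k. \<Sum>j\<le>k. c i * S i j * c j))))"

definition shiftseq :: "(nat \<Rightarrow> 'a) \<Rightarrow> nat \<Rightarrow> 'a" where
  "shiftseq x = (\<lambda>s. x (Suc s))"

definition stationary_ergodic :: "(nat \<Rightarrow> 'a) measure \<Rightarrow> bool" where
  "stationary_ergodic P \<longleftrightarrow>
     prob_space P \<and> shiftseq \<in> P \<rightarrow>\<^sub>M P \<and> distr P P shiftseq = P \<and>
     (\<forall>A\<in>sets P. shiftseq -` A \<inter> space P = A \<longrightarrow> emeasure P A = 0 \<or> emeasure P A = 1)"

text \<open>R^p is represented by functions on {..<p} (extensional), with the product Borel sigma-algebra.\<close>
definition Rp :: "nat \<Rightarrow> (nat \<Rightarrow> real) measure" where
  "Rp p = (\<Pi>\<^sub>M i\<in>{..<p}. borel)"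

definition eucl_norm :: "nat \<Rightarrow> (nat \<Rightarrow> real) \<Rightarrow> real" where
  "eucl_norm p z = sqrt (\<Sum>i<p. (z i)\<^sup>2)"

text \<open>Z_t = (X_t, ..., X_{t-p+1}); time is integer-valued (initial values at t <= 0).\<close>
definition Zvec :: "nat \<Rightarrow> (int \<Rightarrow> 'w \<Rightarrow> real) \<Rightarrow> int \<Rightarrow> 'w \<Rightarrow> (nat \<Rightarrow> real)" where
  "Zvec p X t \<omega> = (\<lambda>i\<in>{..<p}. X (t - int i) \<omega>)"

definition omega :: "(nat \<Rightarrow> nat) \<Rightarrow> nat \<Rightarrow> int \<Rightarrow> real" where
  "omega tb j t = (if int (tb j) \<le> t \<and> t < int (tb (Suc j)) then 1 else 0)"

definition shiftterm :: "nat \<Rightarrow> (nat \<Rightarrow> nat) \<Rightarrow> (nat \<Rightarrow> real) \<Rightarrow> int \<Rightarrow> real" where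
  "shiftterm k tb g t = (\<Sum>j\<le>k. g j * omega tb j t)"

definition score :: "(real \<Rightarrow> real) \<Rightarrow> real \<Rightarrow> real" where
  "score f x = deriv f x / f x"

text \<open>Residual eps_t(psi, gamma), psi = (rho, theta).\<close>
definition resid ::
  "nat \<Rightarrow> nat \<Rightarrow> (nat \<Rightarrow> nat) \<Rightarrow> ('r \<Rightarrow> (nat \<Rightarrow> real) \<Rightarrow> real) \<Rightarrow> ('s \<Rightarrow> (nat \<Rightarrow> real) \<Rightarrow> real)
    \<Rightarrow> (int \<Rightarrow> 'w \<Rightarrow> real) \<Rightarrow> 'r \<Rightarrow> 's \<Rightarrow> (nat \<Rightarrow> real) \<Rightarrow> int \<Rightarrow> 'w \<Rightarrow> real" where
  "resid p k tb T V X \<rho> \<theta> g t \<omega> =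
     (X t \<omega> - T \<rho> (Zvec p X (t - 1) \<omega>) - shiftterm k tb g t) / V \<theta> (Zvec p X (t - 1) \<omega>)"

definition Delta ::
  "nat \<Rightarrow> nat \<Rightarrow> (nat \<Rightarrow> nat) \<Rightarrow> ('r \<Rightarrow> (nat \<Rightarrow> real) \<Rightarrow> real) \<Rightarrow> ('s \<Rightarrow> (nat \<Rightarrow> real) \<Rightarrow> real)
    \<Rightarrow> (real \<Rightarrow> real) \<Rightarrow> nat \<Rightarrow> (int \<Rightarrow> 'w \<Rightarrow> real) \<Rightarrow> 'r \<Rightarrow> 's \<Rightarrow> (nat \<Rightarrow> real) \<Rightarrow> (nat \<Rightarrow> real)
    \<Rightarrow> 'w \<Rightarrow> real" where
  "Delta p k tb T V f n X \<rho> \<theta> g \<beta> \<omega> =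
     (1 / sqrt (real n)) *
     (\<Sum>t\<in>{1..int n}. shiftterm k tb \<beta> t / V \<theta> (Zvec p X (t - 1) \<omega>)
                        * score f (resid p k tb T V X \<rho> \<theta> g t \<omega>))"

definition grad :: "(real^'n \<Rightarrow> real) \<Rightarrow> real^'n \<Rightarrow> real^'n" where
  "grad h x = (\<chi> i. frechet_derivative h (at x) (axis i 1))"

definition hess :: "(real^'n \<Rightarrow> real) \<Rightarrow> real^'n \<Rightarrow> real^'n^'n" where
  "hess h x = (\<chi> i j. frechet_derivative (\<lambda>y. grad h y $ i) (at x) (axis j 1))"

definition maxrowsum :: "real^'n^'m \<Rightarrow> real" where
  "maxrowsum A = Max (range (\<lambda>i. \<Sum>j\<in>UNIV. \<bar>A $ i $ j\<bar>))"

definition assm_A :: "(real \<Rightarrow> real) \<Rightarrow> bool" where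
  "assm_A f \<longleftrightarrow>
     \<comment> \<open>(A1)\<close>
     f differentiable_on UNIV \<and>
     integrable lborel (\<lambda>x. x * f x) \<and> (\<integral>x. x * f x \<partial>lborel) = 0 \<and>
     integrable lborel (\<lambda>x. x\<^sup>2 * f x) \<and> (\<integral>x. x\<^sup>2 * f x \<partial>lborel) = 1 \<and>
     \<comment> \<open>(A2)\<close>
     score f differentiable_on UNIV \<and>
     (\<exists>c. 0 < c \<and> c-lipschitz_on UNIV (deriv (score f))) \<and>
     \<comment> \<open>(A3)\<close>
     (f \<longlongrightarrow> 0) at_top \<and> (f \<longlongrightarrow> 0) at_bot \<and>
     (deriv f \<longlongrightarrow> 0) at_top \<and> (deriv f \<longlongrightarrow> 0) at_bot \<and>
     \<comment> \<open>(A4)\<close>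
     integrable lborel (\<lambda>x. \<bar>score f x\<bar> ^ 3 * f x)"

definition assm_A5 :: "nat \<Rightarrow> (nat \<Rightarrow> nat \<Rightarrow> nat) \<Rightarrow> bool" where
  "assm_A5 k tb \<longleftrightarrow>
     (\<forall>j\<in>{1..k+1}. filterlim (\<lambda>n. tb n j - tb n (j - 1)) at_top sequentially \<and>
        (\<exists>\<alpha>. (\<lambda>n. real (tb n j - tb n (j - 1)) / real n) \<longlonglongrightarrow> \<alpha>))"

text \<open>(A6): in sample n, the vectors Z_t all of whose components are indexed in
  [t_{j-1}, t_j), i.e. t_{j-1}+p-1 <= t < t_j, are (the initial segment of) a stationary ergodic
  sequence, whose law P does not depend on n, and F j is its marginal law.\<close>
definition assm_A6 ::
  "'w measure \<Rightarrow> nat \<Rightarrow> nat \<Rightarrow> (nat \<Rightarrow> nat \<Rightarrow> nat) \<Rightarrow> (nat \<Rightarrow> int \<Rightarrow> 'w \<Rightarrow> real)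
    \<Rightarrow> (nat \<Rightarrow> (nat \<Rightarrow> real) measure) \<Rightarrow> bool" where
  "assm_A6 M p k tb X F \<longleftrightarrow>
     (\<forall>j\<in>{1..k+1}. \<exists>P :: (nat \<Rightarrow> nat \<Rightarrow> real) measure.
        sets P = sets (\<Pi>\<^sub>M s\<in>UNIV. Rp p) \<and> stationary_ergodic P \<and>
        F j = distr P (Rp p) (\<lambda>x. x 0) \<and>
        (\<forall>n>k+1. let L = tb n j - tb n (j - 1) + 1 - p in
           distr M (\<Pi>\<^sub>M s\<in>{..<L}. Rp p)
             (\<lambda>\<omega>. \<lambda>s\<in>{..<L}. Zvec p (X n) (int (tb n (j - 1)) + int p - 1 + int s) \<omega>)
           = distr P (\<Pi>\<^sub>M s\<in>{..<L}. Rp p) (\<lambda>x. restrict x {..<L})))"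

definition assm_A7 ::
  "nat \<Rightarrow> (real \<Rightarrow> real) \<Rightarrow> ('s \<Rightarrow> (nat \<Rightarrow> real) \<Rightarrow> real) \<Rightarrow> 's \<Rightarrow> (nat \<Rightarrow> (nat \<Rightarrow> real) measure) \<Rightarrow> bool" where
  "assm_A7 k f V \<theta>0 F \<longleftrightarrow>
     integrable lborel (\<lambda>x. (score f x)\<^sup>2 * f x) \<and>
     (\<forall>j\<in>{1..k+1}. \<forall>l::nat. l \<le> 3 \<longrightarrow> integrable (F j) (\<lambda>z. (1 / V \<theta>0 z) ^ l))"

definition assm_B0 :: "nat \<Rightarrow> 's set \<Rightarrow> ('s \<Rightarrow> (nat \<Rightarrow> real) \<Rightarrow> real) \<Rightarrow> bool" where
  "assm_B0 p \<Theta>' V \<longleftrightarrow> (\<exists>\<tau>>0. \<forall>\<theta>\<in>\<Theta>'. \<forall>z\<in>space (Rp p). \<tau> < V \<theta> z)"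

definition assm_B1 :: "nat \<Rightarrow> nat \<Rightarrow> (nat \<Rightarrow> (nat \<Rightarrow> real) measure) \<Rightarrow> real \<Rightarrow> bool" where
  "assm_B1 p k F \<delta> \<longleftrightarrow> (\<forall>j\<in>{1..k+1}. integrable (F j) (\<lambda>z. eucl_norm p z powr (2 + \<delta>)))"

definition assm_B2 :: "(real \<Rightarrow> real) \<Rightarrow> bool" where
  "assm_B2 f \<longleftrightarrow> integrable lborel (\<lambda>x. \<bar>x * deriv (score f) x\<bar> * f x)"

definition assm_B3 ::
  "nat \<Rightarrow> nat \<Rightarrow> (real^'l) set \<Rightarrow> (real^'q) set \<Rightarrow> (real^'l \<Rightarrow> (nat \<Rightarrow> real) \<Rightarrow> real)
    \<Rightarrow> (real^'q \<Rightarrow> (nat \<Rightarrow> real) \<Rightarrow> real) \<Rightarrow> real^'l \<Rightarrow> real^'q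
    \<Rightarrow> (nat \<Rightarrow> (nat \<Rightarrow> real) measure) \<Rightarrow> bool" where
  "assm_B3 p k \<Theta> \<Theta>' T V \<rho>0 \<theta>0 F \<longleftrightarrow>
     (\<forall>\<rho>\<in>\<Theta>. continuous_on (space (Rp p)) (T \<rho>)) \<and>
     (\<forall>\<theta>\<in>\<Theta>'. continuous_on (space (Rp p)) (V \<theta>)) \<and>
     (\<forall>z\<in>space (Rp p). (\<lambda>\<rho>. T \<rho> z) differentiable_on interior \<Theta> \<and>
                         (\<lambda>\<theta>. V \<theta> z) differentiable_on interior \<Theta>') \<and>
     (\<exists>r1>0. \<exists>r2>0. \<exists>bnd :: (nat \<Rightarrow> real) \<Rightarrow> real.
        cball \<rho>0 r1 \<subseteq> interior \<Theta> \<and> cball \<theta>0 r2 \<subseteq> interior \<Theta>' \<and>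
        (\<forall>z\<in>space (Rp p). 0 < bnd z) \<and>
        (\<forall>j\<in>{1..k+1}. integrable (F j) (\<lambda>z. bnd z ^ 3)) \<and>
        (\<forall>z\<in>space (Rp p).
           (\<forall>\<rho>\<in>cball \<rho>0 r1. norm (grad (\<lambda>\<rho>'. T \<rho>' z) \<rho>) \<le> bnd z) \<and>
           (\<forall>\<theta>\<in>cball \<theta>0 r2. \<bar>V \<theta> z\<bar> \<le> bnd z \<and>
                norm (grad (\<lambda>\<theta>'. V \<theta>' z) \<theta>) \<le> bnd z \<and>
                (\<lambda>\<theta>'. grad (\<lambda>\<theta>''. V \<theta>'' z) \<theta>') differentiable (at \<theta>) \<and>
                maxrowsum (hess (\<lambda>\<theta>'. V \<theta>' z) \<theta>) \<le> bnd z)))"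

text \<open>(B4): psi_n = (rho_n, theta_n) consistent with the stated asymptotic linear expansion;
  Psi = (Psi1, Psi2), Omega = (Omega1, Omega2) with Omega1, Omega2 scalar.\<close>
definition assm_B4 ::
  "'w measure \<Rightarrow> nat \<Rightarrow> nat \<Rightarrow> (nat \<Rightarrow> int \<Rightarrow> 'w \<Rightarrow> real) \<Rightarrow> (nat \<Rightarrow> int \<Rightarrow> 'w \<Rightarrow> real)
    \<Rightarrow> (real \<Rightarrow> real) \<Rightarrow> real^'l \<Rightarrow> real^'q \<Rightarrow> (nat \<Rightarrow> (nat \<Rightarrow> real) measure) \<Rightarrow> real
    \<Rightarrow> (nat \<Rightarrow> 'w \<Rightarrow> (real^'l) \<times> (real^'q)) \<Rightarrow> bool" where
  "assm_B4 M p k X \<epsilon> f \<rho>0 \<theta>0 F \<delta> \<psi>n \<longleftrightarrow>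
     conv_prob M \<psi>n (\<rho>0, \<theta>0) \<and>
     (\<exists>(\<Psi>1 :: (nat \<Rightarrow> real) \<Rightarrow> (real^'l) \<times> (real^'q) \<Rightarrow> real^'l)
        (\<Psi>2 :: (nat \<Rightarrow> real) \<Rightarrow> (real^'l) \<times> (real^'q) \<Rightarrow> real^'q)
        (\<Omega>1 :: real \<Rightarrow> real) (\<Omega>2 :: real \<Rightarrow> real).
        conv_prob M
          (\<lambda>n \<omega>. sqrt (real n) *\<^sub>R (\<psi>n n \<omega> - (\<rho>0, \<theta>0))
                 - (1 / sqrt (real n)) *\<^sub>R
                   (\<Sum>t\<in>{1..int n}.
                      (\<Omega>1 (\<epsilon> n t \<omega>) *\<^sub>R \<Psi>1 (Zvec p (X n) (t - 1) \<omega>) (\<rho>0, \<theta>0),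
                       \<Omega>2 (\<epsilon> n t \<omega>) *\<^sub>R \<Psi>2 (Zvec p (X n) (t - 1) \<omega>) (\<rho>0, \<theta>0))))
          0 \<and>
        (\<forall>j\<in>{1..k+1}. integrable (F j)
           (\<lambda>z. norm (\<Psi>1 z (\<rho>0, \<theta>0), \<Psi>2 z (\<rho>0, \<theta>0)) powr (2 + \<delta>))) \<and>
        integrable lborel (\<lambda>x. norm (\<Omega>1 x, \<Omega>2 x) powr (2 + \<delta>) * f x) \<and>
        (\<integral>x. \<Omega>1 x * f x \<partial>lborel) = 0 \<and> (\<integral>x. \<Omega>2 x * f x \<partial>lborel) = 0)"

text \<open>Data generating process under H0 (gamma = g0) for the n-th sample, breaks tb n, with
  i.i.d. innovations of density f independent of G_{t-1} = sigma(Z_1, ..., Z_{t-1}).\<close>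
definition model ::
  "'w measure \<Rightarrow> nat \<Rightarrow> nat \<Rightarrow> (nat \<Rightarrow> nat \<Rightarrow> nat) \<Rightarrow> ('r \<Rightarrow> (nat \<Rightarrow> real) \<Rightarrow> real)
    \<Rightarrow> ('s \<Rightarrow> (nat \<Rightarrow> real) \<Rightarrow> real) \<Rightarrow> 'r \<Rightarrow> 's \<Rightarrow> (nat \<Rightarrow> real) \<Rightarrow> (real \<Rightarrow> real)
    \<Rightarrow> (nat \<Rightarrow> int \<Rightarrow> 'w \<Rightarrow> real) \<Rightarrow> (nat \<Rightarrow> int \<Rightarrow> 'w \<Rightarrow> real) \<Rightarrow> bool" where
  "model M p k tb T V \<rho>0 \<theta>0 g0 f X \<epsilon> \<longleftrightarrow>
     prob_space M \<and> (\<forall>x. 0 \<le> f x) \<and>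
     (\<forall>n>k+1. tb n 0 = 1 \<and> tb n (k+1) = n \<and> (\<forall>j\<le>k. tb n j < tb n (Suc j))) \<and>
     (\<forall>n t. X n t \<in> borel_measurable M) \<and>
     (\<forall>n. \<forall>t\<in>{1..int n}. \<forall>\<omega>\<in>space M.
        X n t \<omega> = T \<rho>0 (Zvec p (X n) (t - 1) \<omega>) + shiftterm k (tb n) g0 t
                   + V \<theta>0 (Zvec p (X n) (t - 1) \<omega>) * \<epsilon> n t \<omega>) \<and>
     (\<forall>n. prob_space.indep_vars M (\<lambda>_. borel) (\<epsilon> n) {1..int n}) \<and>
     (\<forall>n. \<forall>t\<in>{1..int n}. distributed M lborel (\<epsilon> n t) (\<lambda>x. ennreal (f x))) \<and>
     (\<forall>n. \<forall>t\<in>{1..int n}.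
        let S = (if 2 \<le> t then {2 - int p .. t - 1} else {}) in
        prob_space.indep_set M
          (sets (vimage_algebra (space M) (\<epsilon> n t) borel))
          (sets (vimage_algebra (space M) (\<lambda>\<omega>. \<lambda>s\<in>S. X n s \<omega>) (\<Pi>\<^sub>M s\<in>S. borel))))"

end

theory Submission
  imports Defs
begin
lemma real_distribution_normal_law: "real_distribution (normal_law v)"
proof (cases "0 < v")
  case True
  then have "prob_space (density lborel (\<lambda>x. ennreal (normal_density 0 (sqrt v) x)))"
    by (intro prob_space_normal_density) simp
  then show ?thesis using True unfolding normal_law_def real_distribution_def real_distribution_axioms_def
    by simp
next
  case False
  then show ?thesis unfolding normal_law_def real_distribution_def real_distribution_axioms_def
    by (simp add: prob_space_return)
qed

lemma normal_law_singleton: "x \<noteq> 0 \<Longrightarrow> measure (normal_law v) {x} = 0"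
proof (cases "0 < v")
  case True
  have "emeasure (density lborel (\<lambda>x. ennreal (normal_density 0 (sqrt v) x))) {x} = 0"
    by (subst emeasure_density) (auto intro!: nn_integral_null_set simp: null_sets_def)
  then show ?thesis using True unfolding normal_law_def by (simp add: measure_def)
next
  case False
  assume "x \<noteq> 0"
  then show ?thesis using False unfolding normal_law_def by (simp add: measure_def)
qed

lemma tight_from_normal:
  fixes Y :: "nat \<Rightarrow> 'w \<Rightarrow> real"
  assumes M: "prob_space M" and Ym: "\<And>m. Y m \<in> borel_measurable M"
    and wc: "weak_conv_m (\<lambda>m. distr M borel (Y m)) (normal_law v)"
    and eta: "0 < \<eta>"
  shows "\<exists>K0. \<forall>K\<ge>K0. eventually (\<lambda>m. measure M {\<omega>\<in>space M. K < \<bar>Y m \<omega>\<bar>} < \<eta>) sequentially"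
proof -
  interpret M: prob_space M by (rule M)
  interpret L: real_distribution "normal_law v" by (rule real_distribution_normal_law)
  have ev1: "eventually (\<lambda>x. 1 - \<eta>/4 < cdf (normal_law v) x) at_top"
    using L.cdf_lim_at_top_prob eta by (intro order_tendstoD) auto
  have "eventually (\<lambda>x. cdf (normal_law v) x < \<eta>/4) at_bot"
    using L.cdf_lim_at_bot eta by (intro order_tendstoD) auto
  then have ev2: "eventually (\<lambda>x. cdf (normal_law v) (-x) < \<eta>/4) at_top"
    using filterlim_uminus_at_bot_at_top eventually_compose_filterlim by blast
  obtain x where x: "0 < x" "1 - \<eta>/4 < cdf (normal_law v) x" "cdf (normal_law v) (-x) < \<eta>/4"
    using eventually_conj[OF eventually_gt_at_top[of 0] eventually_conj[OF ev1 ev2]]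
    by (metis (lifting) eventually_at_top_linorder order.refl)
  have c1: "isCont (cdf (normal_law v)) x" using x normal_law_singleton L.isCont_cdf by auto
  have c2: "isCont (cdf (normal_law v)) (-x)" using x normal_law_singleton L.isCont_cdf by auto
  have cdfY: "cdf (distr M borel (Y m)) y = measure M {\<omega>\<in>space M. Y m \<omega> \<le> y}" for m y
    unfolding cdf_def using Ym by (subst measure_distr) (auto intro!: arg_cong[where f="measure M"])
  have l1: "(\<lambda>m. measure M {\<omega>\<in>space M. Y m \<omega> \<le> x}) \<longlonglongrightarrow> cdf (normal_law v) x"
    using wc c1 unfolding weak_conv_m_def weak_conv_def cdfY by blast
  have l2: "(\<lambda>m. measure M {\<omega>\<in>space M. Y m \<omega> \<le> -x}) \<longlonglongrightarrow> cdf (normal_law v) (-x)"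
    using wc c2 unfolding weak_conv_m_def weak_conv_def cdfY by blast
  have e1: "eventually (\<lambda>m. 1 - \<eta>/2 < measure M {\<omega>\<in>space M. Y m \<omega> \<le> x}) sequentially"
    using l1 x eta by (intro order_tendstoD) auto
  have e2: "eventually (\<lambda>m. measure M {\<omega>\<in>space M. Y m \<omega> \<le> -x} < \<eta>/2) sequentially"
    using l2 x eta by (intro order_tendstoD) auto
  show ?thesis
  proof (intro exI allI impI)
    fix K assume K: "x \<le> K"
    show "eventually (\<lambda>m. measure M {\<omega>\<in>space M. K < \<bar>Y m \<omega>\<bar>} < \<eta>) sequentially"
      using eventually_conj[OF e1 e2]
    proof (rule eventually_mono)
      fix m assume a: "1 - \<eta>/2 < measure M {\<omega>\<in>space M. Y m \<omega> \<le> x} \<and> measure M {\<omega>\<in>space M. Y m \<omega> \<le> -x} < \<eta>/2"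
      have [measurable]: "Y m \<in> borel_measurable M" by (rule Ym)
      have "measure M {\<omega>\<in>space M. K < \<bar>Y m \<omega>\<bar>} \<le> measure M ({\<omega>\<in>space M. Y m \<omega> \<le> -x} \<union> (space M - {\<omega>\<in>space M. Y m \<omega> \<le> x}))"
        using K x by (intro M.finite_measure_mono) auto
      also have "\<dots> \<le> measure M {\<omega>\<in>space M. Y m \<omega> \<le> -x} + measure M (space M - {\<omega>\<in>space M. Y m \<omega> \<le> x})"
        by (intro measure_Un_le) auto
      also have "measure M (space M - {\<omega>\<in>space M. Y m \<omega> \<le> x}) = 1 - measure M {\<omega>\<in>space M. Y m \<omega> \<le> x}"
        by (subst M.prob_compl) auto
      finally show "measure M {\<omega>\<in>space M. K < \<bar>Y m \<omega>\<bar>} < \<eta>" using a by linarith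
    qed
  qed
qed

lemma mvt_bound:
  fixes \<phi> :: "real \<Rightarrow> real"
  assumes d: "\<phi> differentiable_on UNIV" and L: "c-lipschitz_on UNIV (deriv \<phi>)"
  shows "\<bar>\<phi> (a + h) - \<phi> a\<bar> \<le> \<bar>h\<bar> * (\<bar>deriv \<phi> 0\<bar> + c * (\<bar>a\<bar> + \<bar>h\<bar>))"
proof -
  have D: "DERIV \<phi> x :> deriv \<phi> x" for x
    using d by (simp add: DERIV_deriv_iff_real_differentiable differentiable_on_def)
  have c0: "0 \<le> c" using L lipschitz_on_nonneg by blast
  have bd: "\<bar>deriv \<phi> x\<bar> \<le> \<bar>deriv \<phi> 0\<bar> + c * \<bar>x\<bar>" for x
  proof -
    have "dist (deriv \<phi> x) (deriv \<phi> 0) \<le> c * dist x 0"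
      using L by (intro lipschitz_onD) auto
    then show ?thesis by (simp add: dist_real_def)
  qed
  have gen: "\<bar>\<phi> v - \<phi> u\<bar> \<le> (v - u) * (\<bar>deriv \<phi> 0\<bar> + c * (\<bar>a\<bar> + \<bar>h\<bar>))"
    if uv: "u < v" "\<bar>u\<bar> \<le> \<bar>a\<bar> + \<bar>h\<bar>" "\<bar>v\<bar> \<le> \<bar>a\<bar> + \<bar>h\<bar>" for u v
  proof -
    obtain z where z: "u < z" "z < v" "\<phi> v - \<phi> u = (v - u) * deriv \<phi> z"
      using MVT2[OF uv(1) D] by blast
    have "\<bar>z\<bar> \<le> \<bar>a\<bar> + \<bar>h\<bar>" using z uv by linarith
    then have "\<bar>deriv \<phi> z\<bar> \<le> \<bar>deriv \<phi> 0\<bar> + c * (\<bar>a\<bar> + \<bar>h\<bar>)"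
      using bd[of z] c0 by (meson add_left_mono mult_left_mono order_trans)
    then show ?thesis using z uv by (simp add: abs_mult)
  qed
  consider "h = 0" | "0 < h" | "h < 0" by linarith
  then show ?thesis
  proof cases
    case 2 then show ?thesis using gen[of a "a+h"] by simp
  next
    case 3 then show ?thesis using gen[of "a+h" a] by (simp add: abs_minus_commute)
  qed simp
qed

lemma Zvec_space: "Zvec p Y t \<omega> \<in> space (Rp p)"
  unfolding Zvec_def Rp_def by (simp add: space_PiM)

lemma meas_comp_Zvec:
  assumes c: "continuous_on (space (Rp p)) g"
    and Y: "\<And>s. Y s \<in> borel_measurable M"
  shows "(\<lambda>\<omega>. g (Zvec p Y t \<omega>)) \<in> borel_measurable M"
proof -
  have "(\<lambda>\<omega>. Zvec p Y t \<omega>) \<in> borel_measurable M"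
    unfolding Zvec_def
    proof (rule measurable_coordinatewise_then_product)
    fix i show "(\<lambda>\<omega>. (\<lambda>i\<in>{..<p}. Y (t - int i) \<omega>) i) \<in> borel_measurable M"
      by (cases "i < p") (auto simp: Y)
  qed
  then have "(\<lambda>\<omega>. Zvec p Y t \<omega>) \<in> M \<rightarrow>\<^sub>M restrict_space borel (space (Rp p))"
    by (intro measurable_restrict_space2) (auto simp: Zvec_space)
  from measurable_comp[OF this borel_measurable_continuous_on_restrict[OF c]]
  show ?thesis by (simp add: comp_def)
qed

lemma term_bound:
  fixes \<phi> :: "real \<Rightarrow> real"
  assumes mvt: "\<And>x h. \<bar>\<phi> (x + h) - \<phi> x\<bar> \<le> \<bar>h\<bar> * (L0 + c * (\<bar>x\<bar> + \<bar>h\<bar>))"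
    and c0: "0 \<le> c" and L0: "0 \<le> L0" and tau: "0 < \<tau>"
    and a: "\<bar>a\<bar> \<le> Bt" and v: "\<tau> < v" and d: "\<bar>d\<bar> \<le> D"
  shows "\<bar>a / v * (\<phi> e - \<phi> (e + d / v))\<bar> \<le> (Bt / \<tau>) * (D / \<tau>) * (L0 + c * D / \<tau> + c * \<bar>e\<bar>)"
proof -
  have v0: "0 < v" using v tau by linarith
  have D0: "0 \<le> D" using d by linarith
  have h1: "\<bar>a / v\<bar> \<le> Bt / \<tau>"
  proof -
    have "\<bar>a / v\<bar> = \<bar>a\<bar> / v" using v0 by simp
    also have "\<dots> \<le> Bt / v" using a v0 by (simp add: divide_right_mono)
    also have "\<dots> \<le> Bt / \<tau>" using a v tau by (intro divide_left_mono) auto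
    finally show ?thesis .
  qed
  have h2: "\<bar>d / v\<bar> \<le> D / \<tau>"
  proof -
    have "\<bar>d / v\<bar> = \<bar>d\<bar> / v" using v0 by simp
    also have "\<dots> \<le> D / v" using d v0 by (simp add: divide_right_mono)
    also have "\<dots> \<le> D / \<tau>" using D0 v tau by (intro divide_left_mono) auto
    finally show ?thesis .
  qed
  have h3: "\<bar>\<phi> e - \<phi> (e + d / v)\<bar> \<le> (D / \<tau>) * (L0 + c * D / \<tau> + c * \<bar>e\<bar>)"
  proof -
    have "\<bar>\<phi> e - \<phi> (e + d / v)\<bar> \<le> \<bar>d / v\<bar> * (L0 + c * (\<bar>e\<bar> + \<bar>d / v\<bar>))"
      using mvt[of e "d / v"] by (simp add: abs_minus_commute)
    also have "\<dots> \<le> (D / \<tau>) * (L0 + c * (\<bar>e\<bar> + D / \<tau>))"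
      using h2 c0 L0 D0 tau by (intro mult_mono add_left_mono mult_left_mono add_mono) auto
    finally show ?thesis by (simp add: algebra_simps)
  qed
  have "\<bar>a / v * (\<phi> e - \<phi> (e + d / v))\<bar> = \<bar>a / v\<bar> * \<bar>\<phi> e - \<phi> (e + d / v)\<bar>"
    by (simp add: abs_mult)
  also have "\<dots> \<le> (Bt / \<tau>) * ((D / \<tau>) * (L0 + c * D / \<tau> + c * \<bar>e\<bar>))"
    using h1 h3 by (intro mult_mono) (auto intro: order_trans[OF abs_ge_zero h1])
  finally show ?thesis by (simp add: mult.assoc)
qed

lemma sum_bound:
  fixes \<phi> :: "real \<Rightarrow> real"
  assumes mvt: "\<And>x h. \<bar>\<phi> (x + h) - \<phi> x\<bar> \<le> \<bar>h\<bar> * (L0 + c * (\<bar>x\<bar> + \<bar>h\<bar>))"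
    and c0: "0 \<le> c" and L0: "0 \<le> L0" and tau: "0 < \<tau>"
    and a: "\<And>t. t \<in> I \<Longrightarrow> \<bar>a t\<bar> \<le> Bt" and v: "\<And>t. t \<in> I \<Longrightarrow> \<tau> < v t"
    and d: "\<And>t. t \<in> I \<Longrightarrow> \<bar>d t\<bar> \<le> D"
  shows "\<bar>\<Sum>t\<in>I. a t / v t * (\<phi> (e t) - \<phi> (e t + d t / v t))\<bar>
          \<le> (Bt / \<tau>) * (D / \<tau>) * (real (card I) * (L0 + c * D / \<tau>) + c * (\<Sum>t\<in>I. \<bar>e t\<bar>))"
proof -
  have "\<bar>\<Sum>t\<in>I. a t / v t * (\<phi> (e t) - \<phi> (e t + d t / v t))\<bar>
        \<le> (\<Sum>t\<in>I. \<bar>a t / v t * (\<phi> (e t) - \<phi> (e t + d t / v t))\<bar>)"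
    by (rule sum_abs)
  also have "\<dots> \<le> (\<Sum>t\<in>I. (Bt / \<tau>) * (D / \<tau>) * (L0 + c * D / \<tau> + c * \<bar>e t\<bar>))"
    by (intro sum_mono term_bound[OF mvt c0 L0 tau] a v d)
  also have "\<dots> = (Bt / \<tau>) * (D / \<tau>) * (real (card I) * (L0 + c * D / \<tau>) + c * (\<Sum>t\<in>I. \<bar>e t\<bar>))"
    by (simp add: sum_distrib_left sum.distrib algebra_simps)
  finally show ?thesis .
qed

lemma final_arith:
  fixes B \<tau> L0 c Dn K K' Sn n sN :: real
  assumes "0 \<le> B" "0 < \<tau>" "0 \<le> L0" "0 \<le> c" "0 \<le> Dn" "Dn \<le> K' / sN" "Dn \<le> K'"
    "0 \<le> Sn" "Sn \<le> n * K" "0 < n" "1 \<le> sN"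
  shows "(1 / sqrt n) * ((B / \<tau>) * (Dn / \<tau>) * (n * (L0 + c * Dn / \<tau>) + c * Sn))
         \<le> (B / \<tau>) * (K' / \<tau>) * (L0 + c * K' / \<tau> + c * K) * (sqrt n / sN)"
proof -
  have K'0: "0 \<le> K'" using assms by linarith
  have h1: "(B / \<tau>) * (Dn / \<tau>) \<le> (B / \<tau>) * ((K' / sN) / \<tau>)"
    using assms by (intro mult_left_mono divide_right_mono) auto
  have h2: "n * (L0 + c * Dn / \<tau>) + c * Sn \<le> n * (L0 + c * K' / \<tau> + c * K)"
  proof -
    have "c * Dn / \<tau> \<le> c * K' / \<tau>" using assms by (intro divide_right_mono mult_left_mono) auto
    then have "n * (L0 + c * Dn / \<tau>) \<le> n * (L0 + c * K' / \<tau>)" using assms by (intro mult_left_mono) auto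
    moreover have "c * Sn \<le> n * (c * K)" using assms mult_left_mono[of Sn "n*K" c] by (simp add: algebra_simps)
    ultimately show ?thesis by (simp add: algebra_simps)
  qed
  have "(B / \<tau>) * (Dn / \<tau>) * (n * (L0 + c * Dn / \<tau>) + c * Sn)
        \<le> (B / \<tau>) * ((K' / sN) / \<tau>) * (n * (L0 + c * K' / \<tau> + c * K))"
    using assms K'0 by (intro mult_mono[OF h1 h2]) (auto intro!: add_nonneg_nonneg mult_nonneg_nonneg)
  then have "(1 / sqrt n) * ((B / \<tau>) * (Dn / \<tau>) * (n * (L0 + c * Dn / \<tau>) + c * Sn))
        \<le> (1 / sqrt n) * ((B / \<tau>) * ((K' / sN) / \<tau>) * (n * (L0 + c * K' / \<tau> + c * K)))"
    using assms by (intro mult_left_mono) auto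
  also have "\<dots> = (B / \<tau>) * (K' / \<tau>) * (L0 + c * K' / \<tau> + c * K) * ((n / sqrt n) / sN)"
    by (simp add: field_simps)
  also have "n / sqrt n = sqrt n" using assms by (metis real_div_sqrt less_imp_le)
  finally show ?thesis .
qed

theorem lemma2:
  fixes M :: "'w measure"
    and p k :: nat
    and tb :: "nat \<Rightarrow> nat \<Rightarrow> nat"
    and T :: "real^'l \<Rightarrow> (nat \<Rightarrow> real) \<Rightarrow> real"
    and V :: "real^'q \<Rightarrow> (nat \<Rightarrow> real) \<Rightarrow> real"
    and \<Theta> :: "(real^'l) set" and \<Theta>' :: "(real^'q) set"
    and \<rho>0 :: "real^'l" and \<theta>0 :: "real^'q"
    and \<gamma>0 :: "nat \<Rightarrow> real"
    and f :: "real \<Rightarrow> real"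
    and X \<epsilon> :: "nat \<Rightarrow> int \<Rightarrow> 'w \<Rightarrow> real"
    and F :: "nat \<Rightarrow> (nat \<Rightarrow> real) measure"
    and \<delta> :: real
    and \<psi>n :: "nat \<Rightarrow> 'w \<Rightarrow> (real^'l) \<times> (real^'q)"
    and N :: "nat \<Rightarrow> nat"
    and \<gamma>h :: "nat \<Rightarrow> 'w \<Rightarrow> (nat \<Rightarrow> real)"
    and \<beta> :: "nat \<Rightarrow> real"
  assumes "1 \<le> p"
    and "\<rho>0 \<in> \<Theta>" and "\<theta>0 \<in> \<Theta>'"
    and H0: "model M p k tb T V \<rho>0 \<theta>0 \<gamma>0 f X \<epsilon>"
    and A: "assm_A f"
    and A5: "assm_A5 k tb"
    and A6: "assm_A6 M p k tb X F"
    and A7: "assm_A7 k f V \<theta>0 F"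
    and B0: "assm_B0 p \<Theta>' V"
    and "0 \<le> \<delta>"
    and B1: "assm_B1 p k F \<delta>"
    and B2: "assm_B2 f"
    and B3: "assm_B3 p k \<Theta> \<Theta>' T V \<rho>0 \<theta>0 F"
    and B4: "assm_B4 M p k X \<epsilon> f \<rho>0 \<theta>0 F \<delta> \<psi>n"
    and N_pos: "\<forall>n. 0 < N n"
    and N_lim: "(\<lambda>n. real n / real (N n)) \<longlonglongrightarrow> 0"
    and est: "consistent_asymp_normal M k \<gamma>h \<gamma>0"
  shows "conv_prob M
           (\<lambda>n \<omega>. Delta p k (tb n) T V f n (X n) \<rho>0 \<theta>0 \<gamma>0 \<beta> \<omega>
                  - Delta p k (tb n) T V f n (X n) \<rho>0 \<theta>0 (\<gamma>h (N n) \<omega>) \<beta> \<omega>) 0"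
proof -
  have Mps: "prob_space M" and f0: "\<And>x. 0 \<le> f x"
    and Xm: "\<And>n t. X n t \<in> borel_measurable M"
    and eqn: "\<And>n t \<omega>. t \<in> {1..int n} \<Longrightarrow> \<omega> \<in> space M \<Longrightarrow> X n t \<omega> = T \<rho>0 (Zvec p (X n) (t - 1) \<omega>)
        + shiftterm k (tb n) \<gamma>0 t + V \<theta>0 (Zvec p (X n) (t - 1) \<omega>) * \<epsilon> n t \<omega>"
    and dist: "\<And>n t. t \<in> {1..int n} \<Longrightarrow> distributed M lborel (\<epsilon> n t) (\<lambda>x. ennreal (f x))"
    using H0 unfolding model_def by auto
  interpret M: prob_space M by (rule Mps)
  obtain \<tau> where tau: "0 < \<tau>" and Vpos: "\<And>z. z \<in> space (Rp p) \<Longrightarrow> \<tau> < V \<theta>0 z"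
    using B0 \<open>\<theta>0 \<in> \<Theta>'\<close> unfolding assm_B0_def by blast
  have Vcont: "continuous_on (space (Rp p)) (V \<theta>0)"
    using B3 \<open>\<theta>0 \<in> \<Theta>'\<close> unfolding assm_B3_def by blast
  have sd: "score f differentiable_on UNIV" using A unfolding assm_A_def by blast
  obtain c where c: "0 < c" "c-lipschitz_on UNIV (deriv (score f))" using A unfolding assm_A_def by blast
  have xf: "integrable lborel (\<lambda>x. x * f x)" using A unfolding assm_A_def by blast
  have ghm: "\<And>m j. j \<le> k \<Longrightarrow> (\<lambda>\<omega>. \<gamma>h m \<omega> j) \<in> borel_measurable M"
    using est unfolding consistent_asymp_normal_def conv_prob_def by blast
  obtain S where Swc: "\<And>cc. weak_conv_m (\<lambda>m. distr M borel (\<lambda>\<omega>. sqrt (real m) * (\<Sum>j\<le>k. cc j * (\<gamma>h m \<omega> j - \<gamma>0 j))))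
       (normal_law (\<Sum>i\<le>k. \<Sum>j\<le>k. cc i * S i j * cc j))"
    using est unfolding consistent_asymp_normal_def by blast
  have scm[measurable]: "score f \<in> borel_measurable borel"
    using sd by (intro borel_measurable_continuous_onI differentiable_imp_continuous_on)
  have Vm[measurable]: "(\<lambda>\<omega>. V \<theta>0 (Zvec p (X n) s \<omega>)) \<in> borel_measurable M" for n s
    by (rule meas_comp_Zvec[OF Vcont Xm])
  have epsm[measurable]: "\<epsilon> n t \<in> borel_measurable M" if "t \<in> {1..int n}" for n t
    proof -
    have "\<epsilon> n t \<in> M \<rightarrow>\<^sub>M lborel" using dist[OF that] by (rule distributed_measurable)
    then show ?thesis by (simp add: measurable_lborel1)
  qed
  define Vz where "Vz n t \<omega> = V \<theta>0 (Zvec p (X n) (t - 1) \<omega>)" for n t \<omega>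
  define G where "G n \<omega> = (1 / sqrt (real n)) * (\<Sum>t\<in>{1..int n}. shiftterm k (tb n) \<beta> t / Vz n t \<omega> *
     (score f (\<epsilon> n t \<omega>) - score f (\<epsilon> n t \<omega> + (shiftterm k (tb n) \<gamma>0 t - shiftterm k (tb n) (\<gamma>h (N n) \<omega>) t) / Vz n t \<omega>)))"
    for n \<omega>
  define dif where "dif n \<omega> = Delta p k (tb n) T V f n (X n) \<rho>0 \<theta>0 \<gamma>0 \<beta> \<omega>
                  - Delta p k (tb n) T V f n (X n) \<rho>0 \<theta>0 (\<gamma>h (N n) \<omega>) \<beta> \<omega>" for n \<omega>
  have Vzpos: "\<tau> < Vz n t \<omega>" for n t \<omega>
    unfolding Vz_def by (intro Vpos Zvec_space)
  have eqG: "dif n \<omega> = G n \<omega>" if \<omega>: "\<omega> \<in> space M" for n \<omega>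
  proof -
    have r: "resid p k (tb n) T V (X n) \<rho>0 \<theta>0 g t \<omega> = \<epsilon> n t \<omega> + (shiftterm k (tb n) \<gamma>0 t - shiftterm k (tb n) g t) / Vz n t \<omega>"
      if t: "t \<in> {1..int n}" for g t
    proof -
      have "Vz n t \<omega> \<noteq> 0" using Vzpos[of n t \<omega>] tau by auto
      then show ?thesis unfolding resid_def eqn[OF t \<omega>] Vz_def[symmetric]
        by (simp add: field_simps)
    qed
    have r0: "resid p k (tb n) T V (X n) \<rho>0 \<theta>0 \<gamma>0 t \<omega> = \<epsilon> n t \<omega>" if t: "t \<in> {1..int n}" for t
      using r[OF t, of \<gamma>0] by simp
    let ?a = "\<lambda>t. shiftterm k (tb n) \<beta> t / Vz n t \<omega>"
    let ?d = "\<lambda>t. (shiftterm k (tb n) \<gamma>0 t - shiftterm k (tb n) (\<gamma>h (N n) \<omega>) t) / Vz n t \<omega>"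
    have s0: "(\<Sum>t\<in>{1..int n}. ?a t * score f (resid p k (tb n) T V (X n) \<rho>0 \<theta>0 \<gamma>0 t \<omega>))
        = (\<Sum>t\<in>{1..int n}. ?a t * score f (\<epsilon> n t \<omega>))"
      by (intro sum.cong) (simp_all add: r0)
    have s1: "(\<Sum>t\<in>{1..int n}. ?a t * score f (resid p k (tb n) T V (X n) \<rho>0 \<theta>0 (\<gamma>h (N n) \<omega>) t \<omega>))
        = (\<Sum>t\<in>{1..int n}. ?a t * score f (\<epsilon> n t \<omega> + ?d t))"
      by (intro sum.cong) (simp_all add: r)
    show ?thesis unfolding dif_def Delta_def G_def Vz_def[symmetric] s0 s1
    proof -
      have "(\<Sum>t\<in>{1..int n}. ?a t * (score f (\<epsilon> n t \<omega>) - score f (\<epsilon> n t \<omega> + ?d t)))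
          = (\<Sum>t\<in>{1..int n}. ?a t * score f (\<epsilon> n t \<omega>)) - (\<Sum>t\<in>{1..int n}. ?a t * score f (\<epsilon> n t \<omega> + ?d t))"
        by (simp only: right_diff_distrib sum_subtractf)
      then show "1 / sqrt (real n) * (\<Sum>t\<in>{1..int n}. ?a t * score f (\<epsilon> n t \<omega>)) -
          1 / sqrt (real n) * (\<Sum>t\<in>{1..int n}. ?a t * score f (\<epsilon> n t \<omega> + ?d t)) =
          1 / sqrt (real n) * (\<Sum>t\<in>{1..int n}. ?a t * (score f (\<epsilon> n t \<omega>) - score f (\<epsilon> n t \<omega> + ?d t)))"
        by (simp only: right_diff_distrib)
    qed
  qed
  have Gm[measurable]: "G n \<in> borel_measurable M" for n
    unfolding G_def Vz_def shiftterm_def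
  proof (intro borel_measurable_times borel_measurable_const borel_measurable_sum borel_measurable_divide
      borel_measurable_diff borel_measurable_add measurable_compose[OF _ scm] Vm, goal_cases)
    case (1 t) then show ?case by (rule epsm)
  next
    case (2 t) then show ?case by (rule epsm)
  next
    case (3 t j) then show ?case using ghm[of j] by simp
  qed
  have difm: "dif n \<in> borel_measurable M" for n
    using Gm[of n] by (rule measurable_cong[THEN iffD1, rotated]) (simp add: eqG)
  define B where "B = (\<Sum>j\<le>k. \<bar>\<beta> j\<bar>)"
  define L0 where "L0 = \<bar>deriv (score f) 0\<bar>"
  define Dn where "Dn n \<omega> = (\<Sum>j\<le>k. \<bar>\<gamma>h (N n) \<omega> j - \<gamma>0 j\<bar>)" for n \<omega>
  define Sn where "Sn n \<omega> = (\<Sum>t\<in>{1..int n}. \<bar>\<epsilon> n t \<omega>\<bar>)" for n \<omega>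
  define Y where "Y j m \<omega> = sqrt (real m) * (\<gamma>h m \<omega> j - \<gamma>0 j)" for j m \<omega>
  have B0': "0 \<le> B" unfolding B_def by (simp add: sum_nonneg)
  have L00: "0 \<le> L0" unfolding L0_def by simp
  have om1: "\<bar>omega tb' j t\<bar> \<le> 1" for tb' j t unfolding omega_def by simp
  have sh_bound: "\<bar>shiftterm k tb' g t - shiftterm k tb' g' t\<bar> \<le> (\<Sum>j\<le>k. \<bar>g' j - g j\<bar>)" for tb' g g' t
  proof -
    have "shiftterm k tb' g t - shiftterm k tb' g' t = (\<Sum>j\<le>k. (g j - g' j) * omega tb' j t)"
      unfolding shiftterm_def by (simp add: sum_subtractf left_diff_distrib)
    also have "\<bar>\<dots>\<bar> \<le> (\<Sum>j\<le>k. \<bar>(g j - g' j) * omega tb' j t\<bar>)" by (rule sum_abs)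
    also have "\<dots> \<le> (\<Sum>j\<le>k. \<bar>g' j - g j\<bar>)"
    proof (rule sum_mono)
      fix j
      have "\<bar>(g j - g' j) * omega tb' j t\<bar> \<le> \<bar>g j - g' j\<bar> * 1"
        unfolding abs_mult by (intro mult_left_mono om1) auto
      then show "\<bar>(g j - g' j) * omega tb' j t\<bar> \<le> \<bar>g' j - g j\<bar>" by (simp add: abs_minus_commute)
    qed
    finally show ?thesis .
  qed
  have sb_bound: "\<bar>shiftterm k tb' \<beta> t\<bar> \<le> B" for tb' t
    using sh_bound[of tb' \<beta> t "\<lambda>_. 0"] unfolding B_def by (simp add: shiftterm_def)
  have mvt: "\<And>x h. \<bar>score f (x + h) - score f x\<bar> \<le> \<bar>h\<bar> * (L0 + c * (\<bar>x\<bar> + \<bar>h\<bar>))"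
    using mvt_bound[OF sd c(2)] unfolding L0_def .
  have Gbound: "\<bar>G n \<omega>\<bar> \<le> (1 / sqrt (real n)) * ((B / \<tau>) * (Dn n \<omega> / \<tau>) *
       (real n * (L0 + c * Dn n \<omega> / \<tau>) + c * Sn n \<omega>))" for n \<omega>
  proof -
    have cardI: "card {1..int n} = n" by simp
    have "\<bar>\<Sum>t\<in>{1..int n}. shiftterm k (tb n) \<beta> t / Vz n t \<omega> *
     (score f (\<epsilon> n t \<omega>) - score f (\<epsilon> n t \<omega> + (shiftterm k (tb n) \<gamma>0 t - shiftterm k (tb n) (\<gamma>h (N n) \<omega>) t) / Vz n t \<omega>))\<bar>
      \<le> (B / \<tau>) * (Dn n \<omega> / \<tau>) * (real (card {1..int n}) * (L0 + c * Dn n \<omega> / \<tau>) + c * Sn n \<omega>)" (is "_ \<le> ?R")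
      unfolding Sn_def
      by (rule sum_bound[OF mvt _ L00 tau]) (use c(1) sb_bound Vzpos sh_bound in \<open>auto simp: Dn_def\<close>)
    have nn: "0 \<le> 1 / sqrt (real n)" by simp
    from mult_left_mono[OF \<open>_ \<le> ?R\<close> nn] show ?thesis unfolding G_def abs_mult abs_of_nonneg[OF nn] cardI .

  qed
  have Ym: "Y j m \<in> borel_measurable M" if "j \<le> k" for j m
    unfolding Y_def using ghm[OF that] by measurable
  have tight: "\<exists>K0. \<forall>K\<ge>K0. eventually (\<lambda>m. measure M {\<omega>\<in>space M. K < \<bar>Y j m \<omega>\<bar>} < \<eta>) sequentially"
    if j: "j \<le> k" and eta: "0 < \<eta>" for j \<eta>
  proof -
    let ?cc = "\<lambda>i. if i = j then 1 else (0::real)"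
    have "(\<lambda>\<omega>. sqrt (real m) * (\<Sum>i\<le>k. ?cc i * (\<gamma>h m \<omega> i - \<gamma>0 i))) = Y j m" for m
    proof -
      have "(\<Sum>i\<le>k. ?cc i * (\<gamma>h m \<omega> i - \<gamma>0 i)) = (\<Sum>i\<le>k. if i = j then \<gamma>h m \<omega> i - \<gamma>0 i else 0)" for \<omega>
        by (intro sum.cong) auto
      then show ?thesis using j by (simp add: Y_def[abs_def])
    qed
    then have "weak_conv_m (\<lambda>m. distr M borel (Y j m)) (normal_law (\<Sum>i\<le>k. \<Sum>l\<le>k. ?cc i * S i l * ?cc l))"
      using Swc[of ?cc] by simp
    then show ?thesis by (rule tight_from_normal[OF Mps Ym[OF j] _ eta])
  qed
  define E where "E = (\<integral>x. f x * \<bar>x\<bar> \<partial>lborel)"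
  have intabs: "integrable lborel (\<lambda>x. f x * \<bar>x\<bar>)"
  proof -
    have "integrable lborel (\<lambda>x. \<bar>x * f x\<bar>)" using xf by (rule integrable_abs)
    moreover have "\<bar>x * f x\<bar> = f x * \<bar>x\<bar>" for x using f0[of x] by (simp add: abs_mult)
    ultimately show ?thesis by simp
  qed
  have E0: "0 \<le> E" unfolding E_def using f0 by (intro integral_nonneg_AE) auto
  have epsint: "integrable M (\<lambda>\<omega>. \<bar>\<epsilon> n t \<omega>\<bar>)" if t: "t \<in> {1..int n}" for n t
    using distributed_integrable[OF dist[OF t], of abs] intabs f0 by simp
  have epsE: "(\<integral>\<omega>. \<bar>\<epsilon> n t \<omega>\<bar> \<partial>M) = E" if t: "t \<in> {1..int n}" for n t
    using distributed_integral[OF dist[OF t], of abs] f0 unfolding E_def by simp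
  have Snint: "integrable M (Sn n)" for n
    unfolding Sn_def[abs_def] by (rule Bochner_Integration.integrable_sum[where I="{1..int n}" and f="\<lambda>t \<omega>. \<bar>\<epsilon> n t \<omega>\<bar>"]) (rule epsint)
  have SnE: "(\<integral>\<omega>. Sn n \<omega> \<partial>M) = real n * E" for n
  proof -
    have "(\<integral>\<omega>. Sn n \<omega> \<partial>M) = (\<Sum>t\<in>{1..int n}. (\<integral>\<omega>. \<bar>\<epsilon> n t \<omega>\<bar> \<partial>M))"
      unfolding Sn_def by (rule Bochner_Integration.integral_sum[where I="{1..int n}" and f="\<lambda>t \<omega>. \<bar>\<epsilon> n t \<omega>\<bar>"]) (rule epsint)
    also have "\<dots> = (\<Sum>t\<in>{1..int n}. E)" by (intro sum.cong refl epsE)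
    finally show ?thesis by simp
  qed
  have Markov: "measure M {\<omega>\<in>space M. real n * K \<le> Sn n \<omega>} \<le> E / K" if "0 < n" "0 < K" for n K
  proof -
    have "measure M {\<omega>\<in>space M. real n * K \<le> Sn n \<omega>} \<le> (\<integral>\<omega>. Sn n \<omega> \<partial>M) / (real n * K)"
      using that by (intro integral_Markov_inequality_measure[OF Snint, of "space M"]) (auto simp: Sn_def)
    also have "\<dots> = E / K" using that by (simp add: SnE)
    finally show ?thesis .
  qed
  have Nlim: "filterlim N at_top sequentially"
  proof -
    have "eventually (\<lambda>n. real n / real (N n) < 1) sequentially"
      using N_lim by (intro order_tendstoD) auto
    then have ev: "eventually (\<lambda>n. n < N n) sequentially"
      by eventually_elim (use N_pos in \<open>simp add: divide_less_eq\<close>)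
    show ?thesis unfolding filterlim_at_top
    proof
      fix Z :: nat
      show "eventually (\<lambda>n. Z \<le> N n) sequentially"
        using ev eventually_ge_at_top[of Z] by eventually_elim simp
    qed
  qed
  have sq: "(\<lambda>n. sqrt (real n / real (N n))) \<longlonglongrightarrow> 0"
    using tendsto_real_sqrt[OF N_lim] by simp
  have difeq: "(\<lambda>n \<omega>. Delta p k (tb n) T V f n (X n) \<rho>0 \<theta>0 \<gamma>0 \<beta> \<omega>
                  - Delta p k (tb n) T V f n (X n) \<rho>0 \<theta>0 (\<gamma>h (N n) \<omega>) \<beta> \<omega>) = dif"
    by (intro ext) (simp add: dif_def)
  have lim: "(\<lambda>n. measure M {\<omega>\<in>space M. e < norm (dif n \<omega> - 0)}) \<longlonglongrightarrow> 0" if e: "0 < e" for e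
  proof (rule order_tendstoI)
    fix a :: real assume "a < 0"
    then show "eventually (\<lambda>n. a < measure M {\<omega>\<in>space M. e < norm (dif n \<omega> - 0)}) sequentially"
      by (intro always_eventually allI) (auto intro: less_le_trans[OF _ measure_nonneg])
  next
    fix \<eta> :: real assume eta: "0 < \<eta>"
    have eta': "0 < \<eta> / (2 * real (k + 1))" using eta by simp
    have "\<forall>j\<in>{..k}. \<exists>K0. \<forall>K\<ge>K0. eventually (\<lambda>m. measure M {\<omega>\<in>space M. K < \<bar>Y j m \<omega>\<bar>} < \<eta> / (2 * real (k + 1))) sequentially"
      using tight eta' by auto
    from bchoice[OF this] obtain K0 where K00: "\<forall>j\<in>{..k}. \<forall>K\<ge>K0 j.
        eventually (\<lambda>m. measure M {\<omega>\<in>space M. K < \<bar>Y j m \<omega>\<bar>} < \<eta> / (2 * real (k + 1))) sequentially"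
      by blast
    have K0: "\<And>j K. j \<in> {..k} \<Longrightarrow> K0 j \<le> K \<Longrightarrow>
        eventually (\<lambda>m. measure M {\<omega>\<in>space M. K < \<bar>Y j m \<omega>\<bar>} < \<eta> / (2 * real (k + 1))) sequentially"
      using K00 by blast
    define K where "K = (\<Sum>j\<le>k. \<bar>K0 j\<bar>) + 4 * E / \<eta> + 1"
    have Kpos: "0 < K" unfolding K_def using E0 eta by (intro add_nonneg_pos add_nonneg_nonneg sum_nonneg) auto
    have KK0: "K0 j \<le> K" if "j \<in> {..k}" for j
    proof -
      have "K0 j \<le> \<bar>K0 j\<bar>" by simp
      also have "\<dots> \<le> (\<Sum>j\<le>k. \<bar>K0 j\<bar>)" using that by (intro member_le_sum) auto
      also have "\<dots> \<le> K" unfolding K_def using E0 eta by simp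
      finally show ?thesis .
    qed
    have EK: "E / K < \<eta> / 4"
    proof -
      have "(\<Sum>j\<le>k. \<bar>K0 j\<bar>) \<ge> 0" by (simp add: sum_nonneg)
      then have s0: "0 \<le> \<eta> * (\<Sum>j\<le>k. \<bar>K0 j\<bar>)" using eta by simp
      have "\<eta> * K = \<eta> * (\<Sum>j\<le>k. \<bar>K0 j\<bar>) + 4 * E + \<eta>" unfolding K_def using eta
        by (simp add: field_simps)
      then have "4 * E < \<eta> * K" using s0 eta by linarith
      then show ?thesis using Kpos by (simp add: divide_less_eq field_simps)
    qed
    define K' where "K' = real (k + 1) * K"
    have K'0: "0 \<le> K'" unfolding K'_def using Kpos by simp
    define Cst where "Cst = (B / \<tau>) * (K' / \<tau>) * (L0 + c * K' / \<tau> + c * K)"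
    have ev1: "eventually (\<lambda>n. \<forall>j\<in>{..k}. measure M {\<omega>\<in>space M. K < \<bar>Y j (N n) \<omega>\<bar>} < \<eta> / (2 * real (k + 1))) sequentially"
      by (intro eventually_ball_finite ballI eventually_compose_filterlim[OF K0 Nlim] KK0) auto
    have ev2: "eventually (\<lambda>n. Cst * sqrt (real n / real (N n)) < e) sequentially"
      using tendsto_mult_right_zero[OF sq, of Cst] e by (intro order_tendstoD) auto
    show "eventually (\<lambda>n. measure M {\<omega>\<in>space M. e < norm (dif n \<omega> - 0)} < \<eta>) sequentially"
      using ev1 ev2 eventually_gt_at_top[of 0]
    proof eventually_elim
      case (elim n)
      define bad where "bad = (\<Union>j\<in>{..k}. {\<omega>\<in>space M. K < \<bar>Y j (N n) \<omega>\<bar>}) \<union> {\<omega>\<in>space M. real n * K \<le> Sn n \<omega>}"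
      have setsY: "{\<omega>\<in>space M. K < \<bar>Y j (N n) \<omega>\<bar>} \<in> sets M" if "j \<in> {..k}" for j
      proof -
        have [measurable]: "Y j (N n) \<in> borel_measurable M" using Ym[of j "N n"] that by simp
        show ?thesis by measurable
      qed
      have setsS: "{\<omega>\<in>space M. real n * K \<le> Sn n \<omega>} \<in> sets M"
      proof -
        have [measurable]: "Sn n \<in> borel_measurable M" using Snint[of n] by auto
        show ?thesis by measurable
      qed
      have sub: "{\<omega>\<in>space M. e < norm (dif n \<omega> - 0)} \<subseteq> bad"
      proof
        fix \<omega> assume \<omega>: "\<omega> \<in> {\<omega>\<in>space M. e < norm (dif n \<omega> - 0)}"
        show "\<omega> \<in> bad"
        proof (rule ccontr)
          assume "\<omega> \<notin> bad"
          then have nb: "\<forall>j\<in>{..k}. \<not> K < \<bar>Y j (N n) \<omega>\<bar>" and nS: "\<not> real n * K \<le> Sn n \<omega>"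
            using \<omega> unfolding bad_def by auto
          have Yb: "\<And>j. j \<in> {..k} \<Longrightarrow> \<bar>Y j (N n) \<omega>\<bar> \<le> K"
          proof -
            fix j assume "j \<in> {..k}"
            then have "\<not> K < \<bar>Y j (N n) \<omega>\<bar>" using nb by blast
            then show "\<bar>Y j (N n) \<omega>\<bar> \<le> K" by linarith
          qed
          have Sb: "Sn n \<omega> \<le> real n * K" using nS by linarith
          have sN: "1 \<le> sqrt (real (N n))" using N_pos by (simp add: Suc_le_eq)
          have "Dn n \<omega> * sqrt (real (N n)) = (\<Sum>j\<le>k. \<bar>Y j (N n) \<omega>\<bar>)"
            unfolding Dn_def Y_def by (simp add: sum_distrib_right sum_distrib_left abs_mult mult.commute)
          also have "\<dots> \<le> (\<Sum>j\<le>k. K)" by (intro sum_mono Yb) auto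
          also have "\<dots> = K'" unfolding K'_def by simp
          finally have DK: "Dn n \<omega> * sqrt (real (N n)) \<le> K'" .
          have D0: "0 \<le> Dn n \<omega>" unfolding Dn_def by (simp add: sum_nonneg)
          have D1: "Dn n \<omega> \<le> K' / sqrt (real (N n))" using DK sN by (simp add: pos_le_divide_eq)
          have D2: "Dn n \<omega> \<le> K'"
          proof -
            have "Dn n \<omega> \<le> Dn n \<omega> * sqrt (real (N n))" using D0 sN by (simp add: mult_le_cancel_left1)
            then show ?thesis using DK by linarith
          qed
          have S0: "0 \<le> Sn n \<omega>" unfolding Sn_def by (simp add: sum_nonneg)
          have "\<bar>dif n \<omega>\<bar> \<le> Cst * (sqrt (real n) / sqrt (real (N n)))"
            using eqG[of \<omega> n] \<omega> Gbound[of n \<omega>]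
              final_arith[OF B0' tau L00 _ D0 D1 D2 S0 Sb _ sN, of c] c elim
            unfolding Cst_def by auto
          also have "\<dots> = Cst * sqrt (real n / real (N n))" by (simp add: real_sqrt_divide)
          finally show False using \<omega> elim by auto
        qed
      qed
      have "measure M {\<omega>\<in>space M. e < norm (dif n \<omega> - 0)} \<le> measure M bad"
        using sub setsY setsS unfolding bad_def by (intro M.finite_measure_mono) auto
      also have "\<dots> \<le> measure M (\<Union>j\<in>{..k}. {\<omega>\<in>space M. K < \<bar>Y j (N n) \<omega>\<bar>}) + measure M {\<omega>\<in>space M. real n * K \<le> Sn n \<omega>}"
        unfolding bad_def using setsY setsS by (intro measure_Un_le) auto
      also have "measure M (\<Union>j\<in>{..k}. {\<omega>\<in>space M. K < \<bar>Y j (N n) \<omega>\<bar>}) \<le> (\<Sum>j\<le>k. measure M {\<omega>\<in>space M. K < \<bar>Y j (N n) \<omega>\<bar>})"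
        using setsY by (intro measure_subadditive_finite) (auto simp: M.emeasure_eq_measure)
      also have "\<dots> \<le> (\<Sum>j\<le>k. \<eta> / (2 * real (k + 1)))"
        using elim by (intro sum_mono less_imp_le) auto
      also have "\<dots> = \<eta> / 2" by (simp add: field_simps)
      also have "measure M {\<omega>\<in>space M. real n * K \<le> Sn n \<omega>} \<le> E / K"
        using Markov elim Kpos by auto
      finally show ?case using EK eta by linarith
    qed
  qed
  show ?thesis unfolding difeq conv_prob_def using difm lim by auto
qed

end
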